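(* Let $n\ge 3$. There exist infinitely many profiles $\mathbf{p}\in\mathbb{Q}^{n!}$ such that for every permutation $\pi\in S_n$ with $\pi(n)\neq 1$, there is some $\mathbf{w}(\pi)\in W$ with $T_{\mathbf{w}(\pi)}\mathbf{p}\in C_\pi$.
   Context: Work over $\mathbb{Q}$. Let $W=\{\mathbf{x}\in\mathbb{Q}^n : x_1>x_2>\cdots>x_n,\ x_1+\cdots+x_n=0\}$ (strict weighting vectors). For $\pi\in S_n$, let $C_\pi=\{\mathbf{x}\in\mathbb{Q}^n : x_{\pi(1)}>x_{\pi(2)}>\cdots>x_{\pi(n)}\}$. Label the permutations of $S_n$ as $\sigma_1,\dots,\sigma_{n!}$ in lexicographic order of one-line notation, and let $R_\ell$ be the $n\times n$ permutation matrix with $R_\ell(i,j)=1$ if $\sigma_\ell(j)=i$ and $0$ otherwise. For a weighting vector $\mathbf{w}$, $T_{\mathbf{w}}$ is the $n\times n!$ matrix whose $\ell$-th column is $R_\ell\mathbf{w}$, so for a profile $\mathbf{p}\in\mathbb{Q}^{n!}$ (where $p_\ell$ is the number of voters with preference $\sigma_\ell$, candidate $\sigma_\ell(k)$ being ranked $k$-th), $T_{\mathbf{w}}\mathbf{p}=\sum_{\ell=1}^{n!}p_\ell R_\ell\mathbf{w}$ is the results vector. *)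

theory Defs
  imports Complex_Main "HOL-Combinatorics.Permutations" "HOL-Library.List_Lexorder"
begin

text \<open>Vectors in Q^n are functions nat => rat, only indices 1..n matter.
  Profiles in Q^(n!) are functions nat => rat supported on 1..n!.\<close>

definition strict_weighting :: "nat \<Rightarrow> (nat \<Rightarrow> rat) set" where
  "strict_weighting n = {w. (\<forall>i\<in>{1..<n}. w i > w (Suc i)) \<and> (\<Sum>i=1..n. w i) = 0}"

definition cone :: "nat \<Rightarrow> (nat \<Rightarrow> nat) \<Rightarrow> (nat \<Rightarrow> rat) set" where
  "cone n \<pi> = {x. \<forall>k\<in>{1..<n}. x (\<pi> k) > x (\<pi> (Suc k))}"

definition oneline_perms_lex :: "nat \<Rightarrow> nat list list" where
  "oneline_perms_lex n = sorted_list_of_set {map \<sigma> [1..<Suc n] | \<sigma>. \<sigma> permutes {1..n}}"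

definition sigma :: "nat \<Rightarrow> nat \<Rightarrow> nat \<Rightarrow> nat" where
  "sigma n l j = (if j \<in> {1..n} then oneline_perms_lex n ! (l - 1) ! (j - 1) else j)"

definition Rmat :: "nat \<Rightarrow> nat \<Rightarrow> nat \<Rightarrow> nat \<Rightarrow> rat" where
  "Rmat n l i j = (if sigma n l j = i then 1 else 0)"

definition results :: "nat \<Rightarrow> (nat \<Rightarrow> rat) \<Rightarrow> (nat \<Rightarrow> rat) \<Rightarrow> nat \<Rightarrow> rat" where
  "results n w p i = (\<Sum>l=1..fact n. p l * (\<Sum>j=1..n. Rmat n l i j * w j))"

definition profile :: "nat \<Rightarrow> (nat \<Rightarrow> rat) \<Rightarrow> bool" where
  "profile n p \<longleftrightarrow> (\<forall>l. l \<notin> {1..fact n} \<longrightarrow> p l = 0)"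

end

theory Submission
  imports Defs
begin

lemma perm_of_props:
  assumes "finite S" "\<And>x. x \<in> S \<Longrightarrow> f x \<in> S" "inj_on f S" "\<And>x. x \<notin> S \<Longrightarrow> f x = x"
  shows "f permutes S"
proof (rule bij_imp_permutes)
  have "f ` S = S" using endo_inj_surj[OF assms(1) _ assms(3)] assms(2) by blast
  then show "bij_betw f S S" using assms(3) by (simp add: bij_betw_def)
qed (use assms in auto)

definition PS :: "nat \<Rightarrow> (nat \<Rightarrow> nat) set" where
  "PS n = {\<sigma>. \<sigma> permutes {1..n}}"

lemma map_perm_inj:
  assumes "\<sigma> permutes {1..n}" "\<tau> permutes {1..n}" "map \<sigma> [1..<Suc n] = map \<tau> [1..<Suc n]"
  shows "\<sigma> = \<tau>"
proof
  fix x show "\<sigma> x = \<tau> x"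
  proof (cases "x \<in> {1..n}")
    case True
    then have "x \<in> set [1..<Suc n]" by auto
    then show ?thesis using assms(3) by (metis map_eq_conv)
  next
    case False then show ?thesis using assms(1,2) by (simp add: permutes_not_in)
  qed
qed

lemma oneline_props:
  "set (oneline_perms_lex n) = (\<lambda>\<sigma>. map \<sigma> [1..<Suc n]) ` PS n"
  "distinct (oneline_perms_lex n)"
  "length (oneline_perms_lex n) = fact n"
proof -
  have eq: "{map \<sigma> [1..<Suc n] | \<sigma>. \<sigma> permutes {1..n}} = (\<lambda>\<sigma>. map \<sigma> [1..<Suc n]) ` PS n"
    unfolding PS_def by auto
  have fin: "finite (PS n)" unfolding PS_def by (simp add: finite_permutations)
  have inj: "inj_on (\<lambda>\<sigma>. map \<sigma> [1..<Suc n]) (PS n)"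
    by (rule inj_onI) (use map_perm_inj in \<open>auto simp: PS_def\<close>)
  show "set (oneline_perms_lex n) = (\<lambda>\<sigma>. map \<sigma> [1..<Suc n]) ` PS n"
    unfolding oneline_perms_lex_def eq using fin by simp
  show "distinct (oneline_perms_lex n)" unfolding oneline_perms_lex_def by simp
  have "card (PS n) = fact n" unfolding PS_def by (rule card_permutations) auto
  then show "length (oneline_perms_lex n) = fact n"
    unfolding oneline_perms_lex_def eq using fin inj by (simp add: card_image)
qed

lemma sigma_eq:
  assumes "l \<in> {1..fact n}" "\<sigma> \<in> PS n" "oneline_perms_lex n ! (l - 1) = map \<sigma> [1..<Suc n]"
  shows "sigma n l = \<sigma>"
proof
  fix j show "sigma n l j = \<sigma> j"
  proof (cases "j \<in> {1..n}")
    case True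
    then have "j - 1 < length [1..<Suc n]" by auto
    then have "map \<sigma> [1..<Suc n] ! (j - 1) = \<sigma> j" using True by (simp del: upt_Suc)
    then show ?thesis using True assms(3) by (simp add: sigma_def)
  next
    case False then show ?thesis using assms(2) unfolding sigma_def PS_def by (auto simp add: permutes_not_in)
  qed
qed

lemma sigma_bij: "bij_betw (sigma n) {1..fact n} (PS n)"
proof -
  let ?L = "oneline_perms_lex n"
  have mem: "sigma n l \<in> PS n \<and> ?L ! (l - 1) = map (sigma n l) [1..<Suc n]" if l: "l \<in> {1..fact n}" for l
  proof -
    have "l - 1 < length ?L" using l oneline_props(3)[of n] by auto
    then have "?L ! (l - 1) \<in> set ?L" by simp
    then obtain \<sigma> where s: "\<sigma> \<in> PS n" "?L ! (l - 1) = map \<sigma> [1..<Suc n]"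
      using oneline_props(1) by auto
    with sigma_eq[OF l s] show ?thesis by simp
  qed
  show ?thesis
  proof (rule bij_betw_imageI)
    show "inj_on (sigma n) {1..fact n}"
    proof (rule inj_onI)
      fix l l' assume l: "l \<in> {1..fact n}" and l': "l' \<in> {1..fact n}" and e: "sigma n l = sigma n l'"
      have "?L ! (l - 1) = ?L ! (l' - 1)" using mem[OF l] mem[OF l'] e by simp
      moreover have "l - 1 < length ?L" "l' - 1 < length ?L" using l l' oneline_props(3)[of n] by auto
      ultimately have "l - 1 = l' - 1" using oneline_props(2) nth_eq_iff_index_eq by blast
      then show "l = l'" using l l' by auto
    qed
    show "sigma n ` {1..fact n} = PS n"
    proof
      show "sigma n ` {1..fact n} \<subseteq> PS n" using mem by auto
      show "PS n \<subseteq> sigma n ` {1..fact n}"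
      proof
        fix \<sigma> assume s: "\<sigma> \<in> PS n"
        then have "map \<sigma> [1..<Suc n] \<in> set ?L" using oneline_props(1) by auto
        then obtain i where i: "i < length ?L" "?L ! i = map \<sigma> [1..<Suc n]" by (metis in_set_conv_nth)
        then have l: "Suc i \<in> {1..fact n}" using oneline_props(3)[of n] by auto
        have "sigma n (Suc i) = \<sigma>" using sigma_eq[OF l s] i by simp
        then show "\<sigma> \<in> sigma n ` {1..fact n}" using l by force
      qed
    qed
  qed
qed

lemma sum_sigma:
  "(\<Sum>l=1..fact n. G (sigma n l)) = (\<Sum>\<sigma>\<in>PS n. G \<sigma>)"
  using sum.reindex_bij_betw[OF sigma_bij, of G] by simp


definition rhoZ :: "nat \<Rightarrow> nat \<Rightarrow> nat" where
  "rhoZ n k = (if k = 1 then n else if 2 \<le> k \<and> k \<le> n then k - 1 else k)"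
definition rhoA :: "nat \<Rightarrow> nat \<Rightarrow> nat \<Rightarrow> nat" where
  "rhoA n i k = (if k = i then 1 else if k = 1 then n else if k = n then i else k)"
definition rhoB :: "nat \<Rightarrow> nat \<Rightarrow> nat \<Rightarrow> nat" where
  "rhoB n i k = (if k = i then n else if k = n then i else k)"

lemma rhoZ_perm: "n \<ge> 2 \<Longrightarrow> rhoZ n permutes {1..n}"
  by (rule perm_of_props) (auto simp: rhoZ_def inj_on_def split: if_splits)
lemma rhoA_perm: "n \<ge> 2 \<Longrightarrow> i \<in> {2..n} \<Longrightarrow> rhoA n i permutes {1..n}"
  by (rule perm_of_props) (auto simp: rhoA_def inj_on_def split: if_splits)
lemma rhoB_perm: "n \<ge> 2 \<Longrightarrow> i \<in> {2..n} \<Longrightarrow> rhoB n i permutes {1..n}"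
  by (rule perm_of_props) (auto simp: rhoB_def inj_on_def split: if_splits)

definition dlt :: "(nat \<Rightarrow> nat) \<Rightarrow> (nat \<Rightarrow> nat) \<Rightarrow> rat" where
  "dlt a \<sigma> = (if \<sigma> = a then 1 else 0)"

definition fco :: "nat \<Rightarrow> (nat \<Rightarrow> nat) \<Rightarrow> rat" where
  "fco n \<sigma> = (2 * of_nat n - 1) * (dlt id \<sigma> - dlt (inv (rhoZ n)) \<sigma>)
     + 2 * (\<Sum>i=2..n. dlt (inv (rhoA n i)) \<sigma> - dlt (inv (rhoB n i)) \<sigma>)"

definition p0 :: "nat \<Rightarrow> nat \<Rightarrow> rat" where
  "p0 n l = (if l \<in> {1..fact n} then fco n (sigma n l) else 0)"

lemma dlt_sum: "a \<in> PS n \<Longrightarrow> (\<Sum>\<sigma>\<in>PS n. dlt a \<sigma> * H \<sigma>) = H a"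
proof -
  assume a: "a \<in> PS n"
  have fin: "finite (PS n)" unfolding PS_def by (simp add: finite_permutations)
  have "(\<Sum>\<sigma>\<in>PS n. dlt a \<sigma> * H \<sigma>) = (\<Sum>\<sigma>\<in>PS n. if \<sigma> = a then H \<sigma> else 0)"
    by (rule sum.cong) (auto simp: dlt_def)
  also have "\<dots> = H a" using fin a by (simp add: sum.delta')
  finally show ?thesis .
qed

lemma fco_sum:
  assumes "n \<ge> 2"
  shows "(\<Sum>\<sigma>\<in>PS n. fco n \<sigma> * H \<sigma>) = (2 * of_nat n - 1) * (H id - H (inv (rhoZ n)))
     + 2 * (\<Sum>i=2..n. H (inv (rhoA n i)) - H (inv (rhoB n i)))"
proof -
  have P: "id \<in> PS n" "inv (rhoZ n) \<in> PS n"
    "\<And>i. i \<in> {2..n} \<Longrightarrow> inv (rhoA n i) \<in> PS n" "\<And>i. i \<in> {2..n} \<Longrightarrow> inv (rhoB n i) \<in> PS n"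
    using assms permutes_inv[OF rhoZ_perm] permutes_inv[OF rhoA_perm] permutes_inv[OF rhoB_perm]
    unfolding PS_def by (auto simp del: One_nat_def simp: permutes_id)
  have "(\<Sum>\<sigma>\<in>PS n. fco n \<sigma> * H \<sigma>) =
     (2 * of_nat n - 1) * ((\<Sum>\<sigma>\<in>PS n. dlt id \<sigma> * H \<sigma>) - (\<Sum>\<sigma>\<in>PS n. dlt (inv (rhoZ n)) \<sigma> * H \<sigma>))
     + 2 * (\<Sum>i=2..n. (\<Sum>\<sigma>\<in>PS n. dlt (inv (rhoA n i)) \<sigma> * H \<sigma>) - (\<Sum>\<sigma>\<in>PS n. dlt (inv (rhoB n i)) \<sigma> * H \<sigma>))"
    unfolding fco_def
    by (simp add: algebra_simps sum.distrib sum_subtractf sum_distrib_left sum_distrib_right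
        sum.swap[of _ "PS n" "{2..n}"])
  also have "\<dots> = (2 * of_nat n - 1) * (H id - H (inv (rhoZ n)))
     + 2 * (\<Sum>i=2..n. H (inv (rhoA n i)) - H (inv (rhoB n i)))"
    using P by (simp add: dlt_sum)
  finally show ?thesis .
qed

lemma H_eval:
  fixes w :: "nat \<Rightarrow> rat"
  assumes "\<sigma> permutes {1..n}" "k \<in> {1..n}"
  shows "(\<Sum>j=1..n. (if \<sigma> j = k then 1 else 0) * w j) = w (inv \<sigma> k)"
proof -
  have "(\<Sum>j=1..n. (if \<sigma> j = k then 1 else 0) * w j) = (\<Sum>j=1..n. if j = inv \<sigma> k then w j else (0::rat))"
  proof (rule sum.cong)
    fix j
    have "\<sigma> j = k \<longleftrightarrow> j = inv \<sigma> k" using permutes_inv_eq[OF assms(1)] by metis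
    then show "(if \<sigma> j = k then 1 else 0) * w j = (if j = inv \<sigma> k then w j else 0)" by simp
  qed simp
  also have "\<dots> = w (inv \<sigma> k)"
  proof -
    have "inv \<sigma> k \<in> {1..n}" using permutes_inv[OF assms(1)] assms(2) by (simp only: permutes_in_image)
    then show ?thesis by simp
  qed
  finally show ?thesis .
qed

lemma results_p0:
  assumes "n \<ge> 2" "k \<in> {1..n}"
  shows "results n w (p0 n) k = (2 * of_nat n - 1) * (w k - w (rhoZ n k))
     + 2 * (\<Sum>i=2..n. w (rhoA n i k) - w (rhoB n i k))"
proof -
  define H where "H \<sigma> = (\<Sum>j=1..n. (if \<sigma> j = k then 1 else 0) * w j)" for \<sigma>
  have "results n w (p0 n) k = (\<Sum>l=1..fact n. fco n (sigma n l) * H (sigma n l))"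
    unfolding results_def H_def p0_def Rmat_def by (rule sum.cong) auto
  also have "\<dots> = (\<Sum>\<sigma>\<in>PS n. fco n \<sigma> * H \<sigma>)" by (rule sum_sigma)
  also have "\<dots> = (2 * of_nat n - 1) * (H id - H (inv (rhoZ n)))
     + 2 * (\<Sum>i=2..n. H (inv (rhoA n i)) - H (inv (rhoB n i)))" by (rule fco_sum[OF assms(1)])
  also have "\<dots> = (2 * of_nat n - 1) * (w k - w (rhoZ n k))
     + 2 * (\<Sum>i=2..n. w (rhoA n i k) - w (rhoB n i k))"
  proof -
    have "H id = w k" using H_eval[OF permutes_id assms(2)] by (simp add: H_def)
    moreover have "H (inv (rhoZ n)) = w (rhoZ n k)"
      using H_eval[OF permutes_inv[OF rhoZ_perm[OF assms(1)]] assms(2)]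
      by (simp add: H_def permutes_inv_inv[OF rhoZ_perm[OF assms(1)]])
    moreover have "(\<Sum>i=2..n. H (inv (rhoA n i)) - H (inv (rhoB n i))) = (\<Sum>i=2..n. w (rhoA n i k) - w (rhoB n i k))"
    proof (rule sum.cong)
      fix i assume i: "i \<in> {2..n}"
      show "H (inv (rhoA n i)) - H (inv (rhoB n i)) = w (rhoA n i k) - w (rhoB n i k)"
        using H_eval[OF permutes_inv[OF rhoA_perm[OF assms(1) i]] assms(2)]
          H_eval[OF permutes_inv[OF rhoB_perm[OF assms(1) i]] assms(2)]
        by (simp add: H_def permutes_inv_inv[OF rhoA_perm[OF assms(1) i]] permutes_inv_inv[OF rhoB_perm[OF assms(1) i]])
    qed simp
    ultimately show ?thesis by simp
  qed
  finally show ?thesis .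
qed

lemma results_p0_1:
  assumes "n \<ge> 3"
  shows "results n w (p0 n) 1 = w 1 - w n"
proof -
  have "(\<Sum>i=2..n. w (rhoA n i 1) - w (rhoB n i 1)) = (\<Sum>i=2..n. w n - w 1)"
    by (rule sum.cong) (use assms in \<open>auto simp: rhoA_def rhoB_def\<close>)
  also have "\<dots> = (of_nat n - 1) * (w n - w 1)" using assms by (simp add: of_nat_diff)
  finally have s: "(\<Sum>i=2..n. w (rhoA n i 1) - w (rhoB n i 1)) = (of_nat n - 1) * (w n - w 1)" .
  have "rhoZ n 1 = n" by (simp add: rhoZ_def)
  then show ?thesis using assms s by (simp add: results_p0 algebra_simps)
qed

lemma results_p0_k:
  assumes "n \<ge> 3" "k \<in> {2..n}"
  shows "results n w (p0 n) k = (2 * of_nat n - 1) * (w k - w (k - 1)) + 2 * (w 1 - w n)"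
proof -
  have "(\<Sum>i=2..n. w (rhoA n i k) - w (rhoB n i k)) = (\<Sum>i=2..n. if i = k then w 1 - w n else 0)"
    by (rule sum.cong) (use assms in \<open>auto simp: rhoA_def rhoB_def\<close>)
  also have "\<dots> = w 1 - w n" using assms(2) by simp
  finally have s: "(\<Sum>i=2..n. w (rhoA n i k) - w (rhoB n i k)) = w 1 - w n" .
  have "rhoZ n k = k - 1" using assms by (simp add: rhoZ_def)
  then show ?thesis using assms s by (simp add: results_p0)
qed


lemma aux: fixes N :: rat assumes "3 \<le> N" shows "(N-1)*(2*N*N+N) < (2*N-1)*(2*N*N)"
proof -
  have "0 < N * N * (2 * N - 1) + N" using assms by (intro add_pos_pos mult_pos_pos) auto
  then show ?thesis by (simp add: algebra_simps)
qed

lemma witness: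
  assumes n3: "n \<ge> 3" and pi: "\<pi> permutes {1..n}" and pn: "\<pi> n \<noteq> 1"
  shows "\<exists>w \<in> strict_weighting n. results n w (p0 n) \<in> cone n \<pi>"
proof -
  define m where "m = inv \<pi> 1"
  define M :: nat where "M = 2 * n * n"
  define t :: "nat \<Rightarrow> rat" where "t q = (if q < m then of_nat q else of_nat (M + q))" for q
  define u where "u j = t (inv \<pi> j)" for j
  define W' where "W' k = (\<Sum>j=Suc k..n. u j)" for k
  define c where "c = (\<Sum>i=1..n. W' i) / of_nat n"
  define w where "w k = W' k - c" for k
  define D where "D = (\<Sum>j=2..n. u j)"
  have ipi: "inv \<pi> permutes {1..n}" using permutes_inv[OF pi] .
  have inv_in: "inv \<pi> j \<in> {1..n}" if "j \<in> {1..n}" for j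
    using that ipi by (simp only: permutes_in_image)
  have pi_in: "\<pi> q \<in> {1..n}" if "q \<in> {1..n}" for q
    using that pi by (simp only: permutes_in_image)
  have pinv: "\<pi> (inv \<pi> x) = x" "inv \<pi> (\<pi> x) = x" for x using permutes_inverses[OF pi] by auto
  have m_in: "m \<in> {1..n}" unfolding m_def using inv_in n3 by auto
  have m_ne: "m \<noteq> n" using pn pinv unfolding m_def by metis
  have upos: "u j \<ge> 1" if "j \<in> {2..n}" for j
  proof -
    have "inv \<pi> j \<noteq> m" using that pinv unfolding m_def by (metis One_nat_def atLeastAtMost_iff not_less_eq_eq numeral_2_eq_2 order_refl)
    moreover have "inv \<pi> j \<ge> 1" using inv_in[of j] that by auto
    ultimately show ?thesis unfolding u_def t_def by auto
  qed
  have ubound: "u j \<le> of_nat (M + n)" if "j \<in> {1..n}" for j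
    using inv_in[OF that] unfolding u_def t_def by auto
  have Wdiff: "W' k = u (Suc k) + W' (Suc k)" if "k < n" for k
    unfolding W'_def using that by (simp add: sum.atLeast_Suc_atMost)
  have strict: "w k > w (Suc k)" if "k \<in> {1..<n}" for k
    using Wdiff[of k] upos[of "Suc k"] that unfolding w_def by auto
  have sum0: "(\<Sum>i=1..n. w i) = 0"
    using n3 unfolding w_def c_def by (simp add: sum_subtractf)
  have Wn: "W' n = 0" unfolding W'_def by simp
  have W1: "W' 1 = D" unfolding W'_def D_def by (simp add: numeral_2_eq_2)
  have x1: "results n w (p0 n) 1 = D"
    using results_p0_1[OF n3, of w] W1 Wn unfolding w_def by simp
  have xk: "results n w (p0 n) k = 2 * D - (2 * of_nat n - 1) * u k" if "k \<in> {2..n}" for k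
  proof -
    have "W' (k - 1) = u k + W' k" using Wdiff[of "k - 1"] that by auto
    then show ?thesis using results_p0_k[OF n3 that, of w] W1 Wn unfolding w_def by (simp add: algebra_simps)
  qed
  have Dlow: "D \<ge> of_nat (M + n)"
  proof -
    have pnin: "\<pi> n \<in> {2..n}" using pi_in[of n] pn n3 by auto
    have "u (\<pi> n) = of_nat (M + n)" unfolding u_def t_def using pinv m_in m_ne by auto
    moreover have "u (\<pi> n) \<le> D" unfolding D_def
      by (rule member_le_sum[OF pnin]) (use upos in \<open>auto intro: order_trans[of 0 1]\<close>)
    ultimately show ?thesis by simp
  qed
  have Dup: "D \<le> (of_nat n - 1) * of_nat (M + n)"
  proof -
    have "D \<le> of_nat (card {2..n}) * of_nat (M + n)" unfolding D_def
      by (rule sum_bounded_above) (use ubound in auto)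
    then show ?thesis using n3 by (simp add: of_nat_diff)
  qed
  have y: "results n w (p0 n) (\<pi> q) = (if q = m then D else 2 * D - (2 * of_nat n - 1) * t q)"
    if "q \<in> {1..n}" for q
  proof (cases "q = m")
    case True then show ?thesis using x1 pinv unfolding m_def by simp
  next
    case False
    then have "\<pi> q \<noteq> 1" using pinv unfolding m_def by metis
    then have "\<pi> q \<in> {2..n}" using pi_in[OF that] by auto
    then show ?thesis using xk[of "\<pi> q"] False pinv unfolding u_def by simp
  qed
  have cone: "results n w (p0 n) \<in> cone n \<pi>"
    unfolding cone_def
  proof (intro CollectI ballI)
    fix q assume q: "q \<in> {1..<n}"
    have N: "of_nat n \<ge> (3::rat)" using n3 by simp
    have Mr: "(of_nat (M + n) :: rat) = 2 * of_nat n * of_nat n + of_nat n" unfolding M_def by simp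
    show "results n w (p0 n) (\<pi> q) > results n w (p0 n) (\<pi> (Suc q))"
    proof (cases "q = m")
      case True
      then have "Suc q \<noteq> m" by simp
      then have e: "results n w (p0 n) (\<pi> (Suc q)) = 2 * D - (2 * of_nat n - 1) * of_nat (M + Suc q)"
        using y[of "Suc q"] q True unfolding t_def by auto
      have "D < (2 * of_nat n - 1) * of_nat (M + Suc q)"
      proof -
        have "(2 * of_nat n - 1) * of_nat (M + Suc q) \<ge> (2 * of_nat n - 1) * (2 * of_nat n * (of_nat n :: rat))"
          using N unfolding M_def by (intro mult_left_mono) auto
        moreover have "(of_nat n - 1) * (2 * of_nat n * of_nat n + of_nat n) < (2 * of_nat n - 1) * (2 * of_nat n * (of_nat n :: rat))"
          using aux[OF N] by simp
        ultimately show ?thesis using Dup[unfolded Mr] by linarith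
      qed
      then show ?thesis using e y[of q] q True by auto
    next
      case False
      note qm = False
      show ?thesis
      proof (cases "Suc q = m")
        case True
        then have tq: "t q = of_nat q" unfolding t_def by simp
        have "(2 * of_nat n - 1) * of_nat q < (2 * of_nat n - 1) * (of_nat n :: rat)"
          using N q by (intro mult_strict_left_mono) auto
        moreover have "(2 * of_nat n - 1) * (of_nat n :: rat) \<le> 2 * of_nat n * of_nat n + of_nat n"
          using N by (simp add: algebra_simps)
        ultimately have "D > (2 * of_nat n - 1) * of_nat q" using Dlow Mr by linarith
        then have "D > (2 * of_nat n - 1) * t q" using tq by simp
        then show ?thesis using y[of q] y[of "Suc q"] q True qm by auto
      next
        case False
        have "t q < t (Suc q)" unfolding t_def using False qm by auto
        then have "(2 * of_nat n - 1) * t q < (2 * of_nat n - 1) * t (Suc q)"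
          using N by (intro mult_strict_left_mono) auto
        then show ?thesis using y[of q] y[of "Suc q"] q False qm by auto
      qed
    qed
  qed
  have "w \<in> strict_weighting n" unfolding strict_weighting_def using strict sum0 by auto
  with cone show ?thesis by blast
qed


lemma results_scale: "results n w (\<lambda>l. c * p l) k = c * results n w p k"
  unfolding results_def by (simp add: sum_distrib_left mult.assoc)

theorem theorem3p6:
  fixes n :: nat
  assumes "n \<ge> 3"
  shows "infinite {p. profile n p \<and>
           (\<forall>\<pi>. \<pi> permutes {1..n} \<and> \<pi> n \<noteq> 1 \<longrightarrow>
              (\<exists>w \<in> strict_weighting n. results n w p \<in> cone n \<pi>))}"
proof -
  define g where "g a = (\<lambda>l. of_nat (Suc a) * p0 n l)" for a :: nat
  have inS: "g a \<in> {p. profile n p \<and>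
           (\<forall>\<pi>. \<pi> permutes {1..n} \<and> \<pi> n \<noteq> 1 \<longrightarrow>
              (\<exists>w \<in> strict_weighting n. results n w p \<in> cone n \<pi>))}" for a
  proof (intro CollectI conjI allI impI)
    show "profile n (g a)" unfolding profile_def g_def p0_def by simp
    fix \<pi> assume "\<pi> permutes {1..n} \<and> \<pi> n \<noteq> 1"
    then obtain w where w: "w \<in> strict_weighting n" "results n w (p0 n) \<in> cone n \<pi>"
      using witness[OF assms] by blast
    have "results n w (g a) \<in> cone n \<pi>"
      using w(2) unfolding cone_def g_def results_scale
      by (auto intro: mult_strict_left_mono simp del: of_nat_Suc)
    with w(1) show "\<exists>w \<in> strict_weighting n. results n w (g a) \<in> cone n \<pi>" by blast
  qed
  have "\<exists>l. p0 n l \<noteq> 0"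
  proof (rule ccontr)
    assume "\<not> ?thesis"
    then have z: "p0 n = (\<lambda>l. 0)" by auto
    have "id permutes {1..n}" by (rule permutes_id)
    moreover have "id n \<noteq> (1::nat)" using assms by simp
    ultimately obtain w where "results n w (p0 n) \<in> cone n id"
      using witness[OF assms] by blast
    moreover have "(1::nat) \<in> {1..<n}" using assms by simp
    ultimately have "results n w (p0 n) 1 > results n w (p0 n) 2" unfolding cone_def
      by (metis (no_types, lifting) id_apply mem_Collect_eq numeral_2_eq_2 One_nat_def)
    then show False unfolding z results_def by simp
  qed
  then obtain l0 where l0: "p0 n l0 \<noteq> 0" by blast
  have "inj g"
  proof (rule injI)
    fix a b assume "g a = g b"
    then have "of_nat (Suc a) * p0 n l0 = of_nat (Suc b) * p0 n l0" unfolding g_def by metis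
    then show "a = b" using l0 by (simp del: of_nat_Suc)
  qed
  then have "infinite (range g)" using finite_imageD infinite_UNIV_nat by blast
  moreover have "range g \<subseteq> {p. profile n p \<and>
           (\<forall>\<pi>. \<pi> permutes {1..n} \<and> \<pi> n \<noteq> 1 \<longrightarrow>
              (\<exists>w \<in> strict_weighting n. results n w p \<in> cone n \<pi>))}" using inS by blast
  ultimately show ?thesis using infinite_super by blast
qed

end
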